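(* Let $G$ be a connected graph with no isolated vertices and with $\gamma(G)>1$. Then $$\gamma_t(G) \le \gamma(G) + \tfrac{1}{2}\gamma_c(G).$$ Moreover, this bound is tight: there exists such a graph attaining equality.
   Context: All graphs are finite, simple and undirected. A set $S\subseteq V(G)$ is a dominating set if every vertex not in $S$ is adjacent to some vertex of $S$; $\gamma(G)$ is the minimum size of a dominating set. A set $S$ is a total dominating set if every vertex of $G$ (including those in $S$) is adjacent to some vertex of $S$; $\gamma_t(G)$ is the minimum size of a total dominating set (it exists iff $G$ has no isolated vertices). A set $S$ is a connected dominating set if it is dominating and the subgraph induced by $S$ is connected; $\gamma_c(G)$ is the minimum size of a connected dominating set (it exists iff $G$ is connected). "Isolated-free" means having no isolated vertices. *)

theory Defs
  imports Complex_Main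
begin

definition simple_graph :: "'a set \<Rightarrow> ('a \<Rightarrow> 'a \<Rightarrow> bool) \<Rightarrow> bool" where
  "simple_graph V E \<longleftrightarrow> finite V \<and> (\<forall>u v. E u v \<longrightarrow> u \<in> V \<and> v \<in> V)
     \<and> (\<forall>u v. E u v \<longrightarrow> E v u) \<and> (\<forall>v. \<not> E v v)"

definition isolated_free :: "'a set \<Rightarrow> ('a \<Rightarrow> 'a \<Rightarrow> bool) \<Rightarrow> bool" where
  "isolated_free V E \<longleftrightarrow> (\<forall>v\<in>V. \<exists>u\<in>V. E v u)"

definition connected_graph :: "'a set \<Rightarrow> ('a \<Rightarrow> 'a \<Rightarrow> bool) \<Rightarrow> bool" where
  "connected_graph V E \<longleftrightarrow> V \<noteq> {} \<and> (\<forall>u\<in>V. \<forall>v\<in>V. E\<^sup>*\<^sup>* u v)"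

definition dominating :: "'a set \<Rightarrow> ('a \<Rightarrow> 'a \<Rightarrow> bool) \<Rightarrow> 'a set \<Rightarrow> bool" where
  "dominating V E S \<longleftrightarrow> S \<subseteq> V \<and> (\<forall>v\<in>V - S. \<exists>s\<in>S. E v s)"

definition total_dominating :: "'a set \<Rightarrow> ('a \<Rightarrow> 'a \<Rightarrow> bool) \<Rightarrow> 'a set \<Rightarrow> bool" where
  "total_dominating V E S \<longleftrightarrow> S \<subseteq> V \<and> (\<forall>v\<in>V. \<exists>s\<in>S. E v s)"

definition connected_dominating :: "'a set \<Rightarrow> ('a \<Rightarrow> 'a \<Rightarrow> bool) \<Rightarrow> 'a set \<Rightarrow> bool" where
  "connected_dominating V E S \<longleftrightarrow> dominating V E S \<and>
     connected_graph S (\<lambda>u v. E u v \<and> u \<in> S \<and> v \<in> S)"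

definition domination_number :: "'a set \<Rightarrow> ('a \<Rightarrow> 'a \<Rightarrow> bool) \<Rightarrow> nat" where
  "domination_number V E = (LEAST k. \<exists>S. dominating V E S \<and> card S = k)"

definition total_domination_number :: "'a set \<Rightarrow> ('a \<Rightarrow> 'a \<Rightarrow> bool) \<Rightarrow> nat" where
  "total_domination_number V E = (LEAST k. \<exists>S. total_dominating V E S \<and> card S = k)"

definition connected_domination_number :: "'a set \<Rightarrow> ('a \<Rightarrow> 'a \<Rightarrow> bool) \<Rightarrow> nat" where
  "connected_domination_number V E = (LEAST k. \<exists>S. connected_dominating V E S \<and> card S = k)"

end

theory Submission
  imports Defs
begin

lemma dom_le: "dominating V E S \<Longrightarrow> domination_number V E \<le> card S"
  unfolding domination_number_def by (rule Least_le) blast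

lemma tdom_le: "total_dominating V E S \<Longrightarrow> total_domination_number V E \<le> card S"
  unfolding total_domination_number_def by (rule Least_le) blast

lemma cdom_le: "connected_dominating V E S \<Longrightarrow> connected_domination_number V E \<le> card S"
  unfolding connected_domination_number_def by (rule Least_le) blast

lemma dom_ex: "\<exists>S. dominating V E S \<and> card S = domination_number V E"
proof -
  have "dominating V E V" by (simp add: dominating_def)
  then have "\<exists>k. \<exists>S. dominating V E S \<and> card S = k" by blast
  then show ?thesis unfolding domination_number_def by (rule LeastI_ex)
qed

lemma cdom_ex:
  assumes "simple_graph V E" "connected_graph V E"
  shows "\<exists>S. connected_dominating V E S \<and> card S = connected_domination_number V E"
proof -
  have eq: "(\<lambda>u v. E u v \<and> u \<in> V \<and> v \<in> V) = E"
    using assms(1) unfolding simple_graph_def by (intro ext) blast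
  have "connected_dominating V E V"
    using assms(2) by (simp add: connected_dominating_def dominating_def eq)
  then have "\<exists>k. \<exists>S. connected_dominating V E S \<and> card S = k" by blast
  then show ?thesis unfolding connected_domination_number_def by (rule LeastI_ex)
qed

lemma cdom_total:
  assumes "connected_dominating V E C" "card C \<ge> 2"
  shows "total_dominating V E C"
proof -
  have sub: "C \<subseteq> V" and dm: "\<forall>v\<in>V - C. \<exists>s\<in>C. E v s"
    and cg: "\<forall>u\<in>C. \<forall>v\<in>C. (\<lambda>u v. E u v \<and> u \<in> C \<and> v \<in> C)\<^sup>*\<^sup>* u v"
    using assms(1) by (auto simp: connected_dominating_def dominating_def connected_graph_def)
  have "\<exists>s\<in>C. E v s" if v: "v \<in> V" for v
  proof (cases "v \<in> C")
    case False then show ?thesis using dm v by blast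
  next
    case True
    have fin: "finite C" using assms(2) card.infinite by fastforce
    have "\<exists>u\<in>C. u \<noteq> v"
    proof (rule ccontr)
      assume "\<not> ?thesis"
      then have "C \<subseteq> {v}" by blast
      then have "card C \<le> 1" using card_mono[of "{v}" C] by simp
      then show False using assms(2) by simp
    qed
    then obtain u where u: "u \<in> C" "u \<noteq> v" by blast
    have "(\<lambda>u v. E u v \<and> u \<in> C \<and> v \<in> C)\<^sup>*\<^sup>* v u" using cg True u by blast
    then show ?thesis using u(2)
      by (cases rule: converse_rtranclpE) auto
  qed
  then show ?thesis using sub by (simp add: total_dominating_def)
qed

lemma tdom_2dom:
  assumes "isolated_free V E" "dominating V E D" "finite D"
  shows "total_domination_number V E \<le> 2 * card D"
proof -
  have "\<forall>d\<in>D. \<exists>u\<in>V. E d u" using assms(1,2) by (auto simp: isolated_free_def dominating_def)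
  then obtain f where f: "\<forall>d\<in>D. f d \<in> V \<and> E d (f d)" by metis
  have "total_dominating V E (D \<union> f ` D)"
    using assms(2) f unfolding total_dominating_def dominating_def by blast
  then have "total_domination_number V E \<le> card (D \<union> f ` D)" by (rule tdom_le)
  also have "\<dots> \<le> card D + card (f ` D)" by (rule card_Un_le)
  also have "\<dots> \<le> 2 * card D" using card_image_le[OF assms(3), of f] by simp
  finally show ?thesis .
qed

lemma part1:
  assumes "simple_graph V E" "connected_graph V E" "isolated_free V E" "domination_number V E > 1"
  shows "real (total_domination_number V E)
              \<le> real (domination_number V E) + real (connected_domination_number V E) / 2"
proof -
  have finV: "finite V" using assms(1) by (simp add: simple_graph_def)
  obtain D where D: "dominating V E D" "card D = domination_number V E" using dom_ex by blast
  obtain C where C: "connected_dominating V E C" "card C = connected_domination_number V E"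
    using cdom_ex[OF assms(1,2)] by blast
  have "dominating V E C" using C(1) by (simp add: connected_dominating_def)
  then have "card C \<ge> 2" using dom_le assms(4) by fastforce
  then have "total_domination_number V E \<le> card C"
    using cdom_total[OF C(1)] tdom_le by blast
  moreover have "finite D" using D(1) finV by (meson dominating_def finite_subset)
  then have "total_domination_number V E \<le> 2 * card D" using tdom_2dom[OF assms(3) D(1)] by blast
  ultimately show ?thesis using C(2) D(2) by linarith
qed

definition PV :: "nat set" where "PV = {0..<6}"
definition PE :: "nat \<Rightarrow> nat \<Rightarrow> bool" where
  "PE u v \<longleftrightarrow> u < 6 \<and> v < 6 \<and> (v = Suc u \<or> u = Suc v)"

lemma P_simple: "simple_graph PV PE"
  by (auto simp: simple_graph_def PV_def PE_def)

lemma P_conn: "connected_graph PV PE"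
proof -
  have step: "PE\<^sup>*\<^sup>* i j" if "i \<le> j" "j < 6" for i j
    using that
  proof (induction j)
    case 0 then show ?case by simp
  next
    case (Suc j)
    show ?case
    proof (cases "i = Suc j")
      case True then show ?thesis by simp
    next
      case False
      then have "PE\<^sup>*\<^sup>* i j" using Suc by simp
      moreover have "PE j (Suc j)" using Suc by (simp add: PE_def)
      ultimately show ?thesis by (rule rtranclp.rtrancl_into_rtrancl)
    qed
  qed
  have sym: "PE\<^sup>*\<^sup>* j i" if "PE\<^sup>*\<^sup>* i j" for i j
    using that
  proof (induction rule: rtranclp_induct)
    case base then show ?case by simp
  next
    case (step y z)
    have "PE z y" using step(2) by (auto simp: PE_def)
    then show ?case using step(3) by (rule converse_rtranclp_into_rtranclp)
  qed
  show ?thesis unfolding connected_graph_def PV_def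
    using step sym by (auto simp: not_le intro: less_imp_le) (meson nat_le_linear)
qed

lemma P_iso: "isolated_free PV PE"
  unfolding isolated_free_def PV_def
proof
  fix v assume "v \<in> {0..<6::nat}"
  then show "\<exists>u\<in>{0..<6}. PE v u"
    by (intro bexI[of _ "if v = 0 then 1 else v - 1"]) (auto simp: PE_def)
qed

lemma PV_fin: "S \<subseteq> PV \<Longrightarrow> finite S"
  unfolding PV_def using finite_subset by blast

lemma P_dom_lb:
  assumes "dominating PV PE S" shows "2 \<le> card S"
proof (rule ccontr)
  assume "\<not> 2 \<le> card S"
  then have c: "card S \<le> 1" by simp
  have d0: "0 \<in> S \<or> (\<exists>s\<in>S. PE 0 s)" and d5: "5 \<in> S \<or> (\<exists>s\<in>S. PE 5 s)"
    using assms by (auto simp: dominating_def PV_def)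
  have fin: "finite S" using assms PV_fin by (simp add: dominating_def)
  from d0 obtain a where a: "a \<in> S" "a \<le> 1" by (auto simp: PE_def)
  from d5 obtain b where b: "b \<in> S" "b \<ge> 4" by (auto simp: PE_def)
  have "a \<noteq> b" using a b by simp
  then have "card {a, b} = 2" by simp
  moreover have "card {a,b} \<le> card S" using a b fin by (intro card_mono) auto
  ultimately show False using c by simp
qed

lemma P_dom: "domination_number PV PE = 2"
  unfolding domination_number_def
proof (rule Least_equality)
  show "\<exists>S. dominating PV PE S \<and> card S = 2"
    by (rule exI[of _ "{1,4}"]) (auto simp: dominating_def PV_def PE_def)
next
  fix k assume "\<exists>S. dominating PV PE S \<and> card S = k"
  then show "2 \<le> k" using P_dom_lb by blast
qed

lemma P_tdom_lb:
  assumes "total_dominating PV PE S" shows "4 \<le> card S"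
proof -
  have fin: "finite S" using assms PV_fin by (simp add: total_dominating_def)
  have t: "\<forall>v<6. \<exists>s\<in>S. PE v s" using assms by (auto simp: total_dominating_def PV_def)
  have "1 \<in> S" using t[rule_format, of 0] by (auto simp: PE_def)
  have "4 \<in> S" using t[rule_format, of 5] by (auto simp: PE_def)
  obtain a where a: "a \<in> S" "a = 0 \<or> a = 2" using t[rule_format, of 1] by (auto simp: PE_def)
  obtain b where b: "b \<in> S" "b = 3 \<or> b = 5" using t[rule_format, of 4] by (auto simp: PE_def)
  have "card {1,4,a,b} = 4" using a(2) b(2) by auto
  moreover have "card {1,4,a,b} \<le> card S" using a b fin \<open>1 \<in> S\<close> \<open>4 \<in> S\<close> by (intro card_mono) auto
  ultimately show ?thesis by simp
qed

lemma P_C_conn: "connected_graph {1,2,3,4} (\<lambda>u v. PE u v \<and> u \<in> {1,2,3,4} \<and> v \<in> {1,2,3,4::nat})"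
  (is "connected_graph ?C ?R")
proof -
  have step: "?R\<^sup>*\<^sup>* i j" if "1 \<le> i" "i \<le> j" "j \<le> 4" for i j
    using that
  proof (induction j)
    case 0 then show ?case by simp
  next
    case (Suc j)
    show ?case
    proof (cases "i = Suc j")
      case True then show ?thesis by simp
    next
      case False
      then have "?R\<^sup>*\<^sup>* i j" using Suc by simp
      moreover have "?R j (Suc j)" using Suc False by (auto simp: PE_def)
      ultimately show ?thesis by (rule rtranclp.rtrancl_into_rtrancl)
    qed
  qed
  have sym: "?R\<^sup>*\<^sup>* j i" if "?R\<^sup>*\<^sup>* i j" for i j
    using that
  proof (induction rule: rtranclp_induct)
    case base then show ?case by simp
  next
    case (step y z)
    have "?R z y" using step(2) by (auto simp: PE_def)
    then show ?case using step(3) by (rule converse_rtranclp_into_rtranclp)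
  qed
  have "?R\<^sup>*\<^sup>* u v" if "u \<in> ?C" "v \<in> ?C" for u v
  proof (cases "u \<le> v")
    case True then show ?thesis using step[of u v] that by auto
  next
    case False then show ?thesis using step[of v u] sym that by auto
  qed
  then show ?thesis unfolding connected_graph_def by blast
qed

lemma P_cdom: "connected_domination_number PV PE = 4"
  unfolding connected_domination_number_def
proof (rule Least_equality)
  show "\<exists>S. connected_dominating PV PE S \<and> card S = 4"
  proof (rule exI[of _ "{1,2,3,4}"], intro conjI)
    show "connected_dominating PV PE {1, 2, 3, 4}"
      unfolding connected_dominating_def
    proof
      show "dominating PV PE {1, 2, 3, 4}" by (auto simp: dominating_def PV_def PE_def)
      show "connected_graph {1, 2, 3, 4} (\<lambda>u v. PE u v \<and> u \<in> {1, 2, 3, 4} \<and> v \<in> {1, 2, 3, 4})"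
        by (rule P_C_conn)
    qed
  qed simp
next
  fix k assume "\<exists>S. connected_dominating PV PE S \<and> card S = k"
  then obtain S where S: "connected_dominating PV PE S" "card S = k" by blast
  then have "2 \<le> card S" using P_dom_lb unfolding connected_dominating_def by blast
  then have "total_dominating PV PE S" using cdom_total S(1) by blast
  then show "4 \<le> k" using P_tdom_lb S(2) by blast
qed

lemma P_tdom: "total_domination_number PV PE = 4"
  unfolding total_domination_number_def
proof (rule Least_equality)
  show "\<exists>S. total_dominating PV PE S \<and> card S = 4"
    by (rule exI[of _ "{1,2,3,4}"]) (auto simp: total_dominating_def PV_def PE_def)
next
  fix k assume "\<exists>S. total_dominating PV PE S \<and> card S = k"
  then show "4 \<le> k" using P_tdom_lb by blast
qed

theorem theorem2p1:
  shows "(\<forall>(V :: 'a set) E. simple_graph V E \<and> connected_graph V E \<and> isolated_free V E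
            \<and> domination_number V E > 1 \<longrightarrow>
            real (total_domination_number V E)
              \<le> real (domination_number V E) + real (connected_domination_number V E) / 2)
       \<and> (\<exists>(V :: nat set) E. simple_graph V E \<and> connected_graph V E \<and> isolated_free V E
            \<and> domination_number V E > 1 \<and>
            real (total_domination_number V E)
              = real (domination_number V E) + real (connected_domination_number V E) / 2)"
proof
  show "\<forall>(V :: 'a set) E. simple_graph V E \<and> connected_graph V E \<and> isolated_free V E
            \<and> domination_number V E > 1 \<longrightarrow>
            real (total_domination_number V E)
              \<le> real (domination_number V E) + real (connected_domination_number V E) / 2"
    using part1 by blast
next
  show "\<exists>(V :: nat set) E. simple_graph V E \<and> connected_graph V E \<and> isolated_free V E
            \<and> domination_number V E > 1 \<and>
            real (total_domination_number V E)
              = real (domination_number V E) + real (connected_domination_number V E) / 2"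
    by (rule exI[of _ PV], rule exI[of _ PE])
       (simp add: P_simple P_conn P_iso P_dom P_tdom P_cdom)
qed

end
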